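(* Let $\epsilon\ge0$ and fix any ordering $e_1,\dots,e_n$ of $V$. Let $S$ be the output of the algorithm that starts with $S=\emptyset$ and, for $i=1,\dots,n$, adds $e_i$ to $S$ if $|S|<k$ and $f(e_i\mid S)\ge\frac{1+\epsilon}{2}\cdot\frac{\mathrm{OPT}}{k}$. Let $\mathcal O$ be a set with $|\mathcal O|\le k$ and $f(\mathcal O)=\mathrm{OPT}$. If $|S\cap\mathcal O|\ge2\epsilon k$, then $f(S)\ge\frac{1+\epsilon}{2}\mathrm{OPT}$.
   Context: $V$ is a finite ground set with $|V|=n$; $f:2^V\to\mathbb{R}_{\ge0}$ is monotone, submodular and normalized; $f(e\mid Y)=f(Y\cup\{e\})-f(Y)$. $k$ is a positive integer and $\mathrm{OPT}=\max\{f(S):S\subseteq V,|S|\le k\}$ (known to the algorithm). *)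

theory Defs
  imports Complex_Main
begin

definition marginal :: "('a set \<Rightarrow> real) \<Rightarrow> 'a \<Rightarrow> 'a set \<Rightarrow> real" where
  "marginal f e Y = f (Y \<union> {e}) - f Y"

definition monotone_set_fun :: "'a set \<Rightarrow> ('a set \<Rightarrow> real) \<Rightarrow> bool" where
  "monotone_set_fun V f \<longleftrightarrow> (\<forall>A B. A \<subseteq> B \<and> B \<subseteq> V \<longrightarrow> f A \<le> f B)"

definition submodular :: "'a set \<Rightarrow> ('a set \<Rightarrow> real) \<Rightarrow> bool" where
  "submodular V f \<longleftrightarrow> (\<forall>A B. A \<subseteq> V \<and> B \<subseteq> V \<longrightarrow> f (A \<union> B) + f (A \<inter> B) \<le> f A + f B)"

definition normalized :: "('a set \<Rightarrow> real) \<Rightarrow> bool" where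
  "normalized f \<longleftrightarrow> f {} = 0"

definition nonneg_set_fun :: "'a set \<Rightarrow> ('a set \<Rightarrow> real) \<Rightarrow> bool" where
  "nonneg_set_fun V f \<longleftrightarrow> (\<forall>A. A \<subseteq> V \<longrightarrow> 0 \<le> f A)"

definition OPT :: "'a set \<Rightarrow> ('a set \<Rightarrow> real) \<Rightarrow> nat \<Rightarrow> real" where
  "OPT V f k = Max (f ` {S. S \<subseteq> V \<and> card S \<le> k})"

definition thr_step :: "('a set \<Rightarrow> real) \<Rightarrow> nat \<Rightarrow> real \<Rightarrow> 'a set \<Rightarrow> 'a \<Rightarrow> 'a set" where
  "thr_step f k tau S e = (if card S < k \<and> marginal f e S \<ge> tau then S \<union> {e} else S)"

definition threshold_alg :: "('a set \<Rightarrow> real) \<Rightarrow> nat \<Rightarrow> real \<Rightarrow> 'a list \<Rightarrow> 'a set" where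
  "threshold_alg f k tau es = foldl (thr_step f k tau) {} es"

end

theory Submission
  imports Defs
begin

lemma fold_mono_sub:
  "T \<subseteq> foldl (thr_step f k tau) T xs \<and> foldl (thr_step f k tau) T xs \<subseteq> T \<union> set xs"
proof (induction xs arbitrary: T)
  case Nil
  then show ?case by simp
next
  case (Cons x xs)
  have "T \<subseteq> thr_step f k tau T x" "thr_step f k tau T x \<subseteq> T \<union> {x}"
    by (auto simp: thr_step_def)
  then show ?case using Cons.IH[of "thr_step f k tau T x"] by auto
qed

lemma dimin:
  assumes "monotone_set_fun V f" "submodular V f" "A \<subseteq> B" "B \<subseteq> V" "e \<in> V"
  shows "marginal f e B \<le> marginal f e A"
proof (cases "e \<in> B")
  case True
  then have 1: "B \<union> {e} = B" by auto
  have "A \<union> {e} \<subseteq> V" using assms by auto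
  then have 2: "f A \<le> f (A \<union> {e})" using assms(1) unfolding monotone_set_fun_def by (metis sup_ge1)
  from 1 2 show ?thesis unfolding marginal_def by simp
next
  case False
  have AeV: "A \<union> {e} \<subseteq> V" using assms by auto
  have "f ((A \<union> {e}) \<union> B) + f ((A \<union> {e}) \<inter> B) \<le> f (A \<union> {e}) + f B"
    using assms(2)[unfolded submodular_def, rule_format, OF conjI[OF AeV assms(4)]] .
  moreover have "(A \<union> {e}) \<union> B = B \<union> {e}" "(A \<union> {e}) \<inter> B = A" using False assms by auto
  ultimately show ?thesis unfolding marginal_def by simp
qed

lemma telesc:
  assumes "finite V" "T \<subseteq> V" "set xs \<subseteq> V"
  shows "f (foldl (thr_step f k tau) T xs) \<ge> f T + tau * (real (card (foldl (thr_step f k tau) T xs)) - real (card T))"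
  using assms(2,3)
proof (induction xs arbitrary: T)
  case Nil
  then show ?case by simp
next
  case (Cons x xs)
  define T' where "T' = thr_step f k tau T x"
  have T'V: "T' \<subseteq> V" using Cons.prems by (auto simp: T'_def thr_step_def)
  have IH: "f (foldl (thr_step f k tau) T' xs) \<ge> f T' + tau * (real (card (foldl (thr_step f k tau) T' xs)) - real (card T'))"
    using Cons.IH[OF T'V] Cons.prems by auto
  have fin: "finite T" using Cons.prems assms(1) finite_subset by blast
  have step: "f T' \<ge> f T + tau * (real (card T') - real (card T))"
  proof (cases "card T < k \<and> marginal f x T \<ge> tau")
    case True
    then have T': "T' = T \<union> {x}" by (simp add: T'_def thr_step_def)
    show ?thesis
    proof (cases "x \<in> T")
      case True then show ?thesis using T' by (simp add: insert_absorb)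
    next
      case False
      then have "card T' = card T + 1" using T' fin by simp
      then show ?thesis using \<open>card T < k \<and> marginal f x T \<ge> tau\<close> T' unfolding marginal_def by simp
    qed
  next
    case False
    then have "T' = T" by (auto simp: T'_def thr_step_def)
    then show ?thesis by simp
  qed
  show ?case using IH step by (simp add: T'_def algebra_simps)
qed

lemma reject:
  assumes "finite V" "monotone_set_fun V f" "submodular V f" "T \<subseteq> V" "set xs \<subseteq> V"
    and "card (foldl (thr_step f k tau) T xs) < k" "e \<in> set xs"
  shows "e \<in> foldl (thr_step f k tau) T xs \<or> marginal f e (foldl (thr_step f k tau) T xs) < tau"
  using assms(4-)
proof (induction xs arbitrary: T)
  case Nil
  then show ?case by simp
next
  case (Cons x xs)
  define T' where "T' = thr_step f k tau T x"
  define R where "R = foldl (thr_step f k tau) T' xs"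
  have T'V: "T' \<subseteq> V" using Cons.prems by (auto simp: T'_def thr_step_def)
  have RV: "R \<subseteq> V" using fold_mono_sub[of T' f k tau xs] T'V Cons.prems by (auto simp: R_def)
  have cR: "card R < k" using Cons.prems by (simp add: R_def T'_def)
  have TT': "T \<subseteq> T'" by (auto simp: T'_def thr_step_def)
  have T'R: "T' \<subseteq> R" using fold_mono_sub[of T' f k tau xs] by (simp add: R_def)
  have "card T \<le> card R" using TT' T'R RV assms(1) by (meson card_mono finite_subset order_trans)
  show ?case
  proof (cases "e = x")
    case True
    show ?thesis
    proof (cases "card T < k \<and> marginal f x T \<ge> tau")
      case c: True
      then have "x \<in> T'" by (simp add: T'_def thr_step_def)
      then show ?thesis using T'R True by (auto simp: R_def T'_def)
    next
      case c: False
      then have "marginal f x T < tau" using \<open>card T \<le> card R\<close> cR by auto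
      moreover have "marginal f x R \<le> marginal f x T"
        using dimin[OF assms(2,3)] TT' T'R RV Cons.prems by auto
      ultimately show ?thesis using True by (simp add: R_def T'_def)
    qed
  next
    case False
    then have "e \<in> set xs" using Cons.prems by simp
    from Cons.IH[OF T'V] this Cons.prems show ?thesis by (simp add: T'_def)
  qed
qed

lemma union_bound:
  assumes "monotone_set_fun V f" "submodular V f" "S \<subseteq> V" "finite X" "X \<subseteq> V"
  shows "f (S \<union> X) \<le> f S + (\<Sum>e\<in>X. marginal f e S)"
  using assms(4,5)
proof (induction X rule: finite_induct)
  case empty then show ?case by simp
next
  case (insert x X)
  have "f (S \<union> insert x X) = f (S \<union> X) + marginal f x (S \<union> X)"
    unfolding marginal_def by (simp add: insert_commute)
  moreover have "marginal f x (S \<union> X) \<le> marginal f x S"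
    using dimin[OF assms(1,2)] insert.prems assms(3) by auto
  ultimately show ?case using insert by simp
qed

theorem mainTheorem12:
  fixes V :: "'a set" and f :: "'a set \<Rightarrow> real" and k :: nat and \<epsilon> :: real
    and es :: "'a list" and Opt :: "'a set"
  assumes "finite V"
    and "nonneg_set_fun V f" and "monotone_set_fun V f" and "submodular V f" and "normalized f"
    and "k > 0"
    and "\<epsilon> \<ge> 0"
    and "distinct es" and "set es = V"
    and "Opt \<subseteq> V" and "card Opt \<le> k" and "f Opt = OPT V f k"
    and "real (card (threshold_alg f k ((1 + \<epsilon>) / 2 * (OPT V f k / k)) es \<inter> Opt)) \<ge> 2 * \<epsilon> * k"
  shows "f (threshold_alg f k ((1 + \<epsilon>) / 2 * (OPT V f k / k)) es) \<ge> (1 + \<epsilon>) / 2 * OPT V f k"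
proof -
  define M where "M = OPT V f k"
  define tau where "tau = (1 + \<epsilon>) / 2 * (M / k)"
  define S where "S = threshold_alg f k tau es"
  have Sdef: "S = foldl (thr_step f k tau) {} es" by (simp add: S_def threshold_alg_def)
  have SV: "S \<subseteq> V" using fold_mono_sub[of "{}" f k tau es] assms(9) Sdef by auto
  have finS: "finite S" using SV assms(1) finite_subset by blast
  have M0: "M \<ge> 0" using assms(2,10,12) unfolding nonneg_set_fun_def M_def by metis
  have tau0: "tau \<ge> 0" using M0 assms(7) by (simp add: tau_def)
  have ktau: "real k * tau = (1 + \<epsilon>) / 2 * M" using assms(6) by (simp add: tau_def)
  have tel: "f S \<ge> f {} + tau * (real (card S) - real (card ({}::'a set)))"
    using telesc[OF assms(1), where T="{}" and xs=es and f=f and k=k and tau=tau] assms(9) Sdef by simp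
  have cardle: "card S \<le> k"
  proof -
    have "\<And>T xs. card T \<le> k \<Longrightarrow> finite T \<Longrightarrow> card (foldl (thr_step f k tau) T xs) \<le> k"
    proof -
      fix T :: "'a set" and xs
      show "card T \<le> k \<Longrightarrow> finite T \<Longrightarrow> card (foldl (thr_step f k tau) T xs) \<le> k"
        by (induction xs arbitrary: T) (auto simp: thr_step_def card_insert_if)
    qed
    then show ?thesis using Sdef by simp
  qed
  show ?thesis
  proof (cases "card S = k")
    case True
    then show ?thesis using tel assms(5) ktau
      by (simp add: normalized_def S_def tau_def M_def mult.commute)
  next
    case False
    then have cS: "card S < k" using cardle by simp
    have rej: "\<And>e. e \<in> Opt - S \<Longrightarrow> marginal f e S \<le> tau"
    proof -
      fix e assume e: "e \<in> Opt - S"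
      then have "e \<in> set es" using assms(9,10) by auto
      from reject[OF assms(1,3,4), where T="{}" and xs=es and k=k and tau=tau and e=e] this cS assms(9) e Sdef
      show "marginal f e S \<le> tau" by auto
    qed
    have finO: "finite Opt" using assms(1,10) finite_subset by blast
    have "f Opt \<le> f (S \<union> (Opt - S))"
      using assms(3,10) SV unfolding monotone_set_fun_def by auto
    also have "\<dots> \<le> f S + (\<Sum>e\<in>Opt - S. marginal f e S)"
      using union_bound[OF assms(3,4) SV, of "Opt - S"] finO assms(10) by auto
    also have "(\<Sum>e\<in>Opt - S. marginal f e S) \<le> (\<Sum>e\<in>Opt - S. tau)"
      using rej by (meson sum_mono)
    also have "\<dots> = real (card (Opt - S)) * tau" by simp
    finally have A: "M \<le> f S + real (card (Opt - S)) * tau" using assms(12) M_def by simp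
    have "card (Opt - S) = card Opt - card (Opt \<inter> S)" by (simp add: card_Diff_subset_Int finO)
    moreover have "card (Opt \<inter> S) \<le> card Opt" using finO by (simp add: card_mono)
    moreover have "S \<inter> Opt = Opt \<inter> S" by auto
    ultimately have "card (Opt - S) + card (S \<inter> Opt) = card Opt" by simp
    then have "real (card (Opt - S)) \<le> real k - 2 * \<epsilon> * k"
      using assms(11,13) by (simp add: S_def tau_def M_def)
    then have B: "real (card (Opt - S)) * tau \<le> (real k - 2 * \<epsilon> * k) * tau"
      using tau0 mult_right_mono by blast
    have C: "(real k - 2 * \<epsilon> * k) * tau = (1 - 2 * \<epsilon>) * ((1 + \<epsilon>) / 2 * M)"
      using ktau by (simp add: algebra_simps)
    have D: "(1 - 2 * \<epsilon>) * ((1 + \<epsilon>) / 2 * M) = M - \<epsilon>^2 * M - (1 + \<epsilon>) / 2 * M"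
      by (simp add: field_simps power2_eq_square)
    have "\<epsilon>^2 * M \<ge> 0" using M0 by simp
    then have "f S \<ge> (1 + \<epsilon>) / 2 * M" using A B C D by linarith
    then show ?thesis by (simp add: S_def tau_def M_def)
  qed
qed

end
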